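(* Let $p$ be a prime number, $N\ge 1$ and $n\ge 0$ integers, and $t=\mathrm{ord}_p(N-1)$. Then $$\prod_{k=0}^{n}\frac{(N+k)!}{N!}\,B_{N,n}\equiv \prod_{k=0}^{n}(1+k)!\ B_n \pmod{p^t}.$$
   Context: For a positive integer $N$, the hypergeometric Bernoulli numbers $B_{N,n}$ are defined by $\frac{x^N/N!}{e^x-\sum_{n=0}^{N-1}x^n/n!}=\sum_{n\ge0} B_{N,n}\frac{x^n}{n!}$, and the classical Bernoulli numbers $B_n$ by $\frac{x}{e^x-1}=\sum_{n\ge0}B_n\frac{x^n}{n!}$ (so $B_n=B_{1,n}$). $\mathrm{ord}_p$ denotes the $p$-adic valuation on $\mathbb{Q}$ (with $\mathrm{ord}_p(0)=\infty$); for rationals $a,b$, $a\equiv b\pmod{p^t}$ means $\mathrm{ord}_p(a-b)\ge t$. *)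

theory Defs
  imports "HOL-Computational_Algebra.Computational_Algebra" "HOL-Library.Extended_Nat"
begin

definition hyp_bernoulli :: "nat \<Rightarrow> nat \<Rightarrow> rat" where
  "hyp_bernoulli N n = fact n * fps_nth
     ((fps_const (1 / fact N) * fps_X ^ N) /
      (fps_exp 1 - (\<Sum>k<N. fps_const (1 / fact k) * fps_X ^ k))) n"

definition bernoulli_num :: "nat \<Rightarrow> rat" where
  "bernoulli_num n = fact n * fps_nth (fps_X / (fps_exp 1 - 1)) n"

text \<open>p-adic valuation of a nonzero rational (value irrelevant at 0).\<close>
definition padic_ord :: "nat \<Rightarrow> rat \<Rightarrow> int" where
  "padic_ord p q = (case quotient_of q of (a, b) \<Rightarrow>
      int (multiplicity (int p) a) - int (multiplicity (int p) b))"

definition nat_ord :: "nat \<Rightarrow> nat \<Rightarrow> enat" where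
  "nat_ord p m = (if m = 0 then \<infinity> else enat (multiplicity p m))"

definition rat_cong :: "nat \<Rightarrow> enat \<Rightarrow> rat \<Rightarrow> rat \<Rightarrow> bool" where
  "rat_cong p t a b \<longleftrightarrow> a = b \<or> (\<exists>m. t = enat m \<and> int m \<le> padic_ord p (a - b))"

end

theory Submission
  imports Defs "HOL-Number_Theory.Number_Theory"
begin

lemma hb_rec:
  fixes N n :: nat
  shows "(\<Sum>i=0..n. hyp_bernoulli N i / (fact i * fact (N + (n - i)))) = (if n = 0 then 1 / fact N else 0)"
proof -
  define G :: "rat fps" where "G = Abs_fps (\<lambda>j. 1 / fact (N + j))"
  define T :: "rat fps" where "T = (\<Sum>k<N. fps_const (1 / fact k) * fps_X ^ k)"
  define H :: "rat fps" where "H = (fps_const (1 / fact N) * fps_X ^ N) / (fps_exp 1 - T)"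
  have Tn: "T $ m = (if m < N then 1 / fact m else 0)" for m
  proof -
    have "T $ m = (\<Sum>k<N. if m = k then 1 / fact k else 0)"
      unfolding T_def fps_sum_nth by (intro sum.cong) auto
    thus ?thesis by (simp add: sum.delta)
  qed
  have D: "fps_exp 1 - T = fps_X ^ N * G"
    by (rule fps_ext) (auto simp: Tn fps_X_power_mult_nth G_def)
  have G0: "G $ 0 \<noteq> 0" by (simp add: G_def)
  hence Gnz: "G \<noteq> 0" by auto
  have "H = (fps_X ^ N * fps_const (1 / fact N)) / (fps_X ^ N * G)"
    unfolding H_def D by (simp add: mult.commute)
  also have "\<dots> = fps_const (1 / fact N) / G"
    by (rule div_mult_mult1) simp
  finally have "H * G = fps_const (1 / fact N)"
    using G0 by (simp add: fps_divide_unit inverse_mult_eq_1 mult.assoc)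
  hence "(H * G) $ n = (if n = 0 then 1 / fact N else 0)" by simp
  moreover have "H $ i = hyp_bernoulli N i / fact i" for i
    unfolding hyp_bernoulli_def H_def T_def by simp
  ultimately show ?thesis
    by (simp add: fps_mult_nth G_def divide_simps)
qed

definition rr :: "nat \<Rightarrow> nat \<Rightarrow> nat \<Rightarrow> nat" where
  "rr N a b = (\<Prod>l\<in>{a<..b}. N + l)"

lemma rr_split:
  assumes "a \<le> b" "b \<le> c"
  shows "rr N a c = rr N a b * rr N b c"
proof -
  have "{a<..c} = {a<..b} \<union> {b<..c}" using assms by auto
  thus ?thesis unfolding rr_def by (simp add: prod.union_disjoint)
qed

lemma rr_Suc: "a \<le> b \<Longrightarrow> rr N a (Suc b) = rr N a b * (N + Suc b)"
proof -
  assume "a \<le> b"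
  hence "{a<..Suc b} = insert (Suc b) {a<..b}" by auto
  thus ?thesis unfolding rr_def by simp
qed

lemma fact_rr: "a \<le> b \<Longrightarrow> fact (N + b) = (fact (N + a) :: nat) * rr N a b"
proof (induction b)
  case 0 thus ?case by (simp add: rr_def)
next
  case (Suc b)
  show ?case
  proof (cases "a = Suc b")
    case True thus ?thesis by (simp add: rr_def)
  next
    case False
    hence ab: "a \<le> b" using Suc.prems by simp
    have "fact (N + Suc b) = (N + Suc b) * (fact (N + b) :: nat)" by simp
    also have "\<dots> = fact (N + a) * rr N a (Suc b)" using Suc.IH[OF ab] rr_Suc[OF ab] by (simp add: algebra_simps)
    finally show ?thesis .
  qed
qed

lemma rr_cong: "N \<ge> 1 \<Longrightarrow> [rr N a b = rr 1 a b] (mod (N - 1))"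
  unfolding rr_def
proof (rule cong_prod)
  fix l assume "N \<ge> 1"
  hence e: "N + l = (1 + l) + (N - 1)" by simp
  have "[(1 + l) + (N - 1) = 1 + l] (mod N - 1)" unfolding cong_def by (rule mod_add_self2)
  thus "[N + l = 1 + l] (mod N - 1)" by (subst e)
qed

definition PP :: "nat \<Rightarrow> nat \<Rightarrow> nat" where
  "PP N n = (\<Prod>k=0..n. rr N 0 k)"

definition KK :: "nat \<Rightarrow> nat \<Rightarrow> nat \<Rightarrow> nat" where
  "KK N n i = rr 0 i n * rr N (n - i) n * (\<Prod>k\<in>{i<..<n}. rr N 0 k)"

lemma KK_cong: "N \<ge> 1 \<Longrightarrow> [KK N n i = KK 1 n i] (mod (N - 1))"
  unfolding KK_def by (intro cong_mult cong_refl cong_prod rr_cong)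

lemma key_ident:
  assumes "i < n"
  shows "PP N n * fact n * fact N = KK N n i * PP N i * fact i * fact (N + (n - i))"
proof -
  have "{0..n} = {0..i} \<union> {i<..n}" using assms by auto
  hence 1: "PP N n = PP N i * (\<Prod>k\<in>{i<..n}. rr N 0 k)"
    unfolding PP_def by (simp, subst prod.union_disjoint) auto
  have "{i<..n} = insert n {i<..<n}" using assms by auto
  hence 2: "(\<Prod>k\<in>{i<..n}. rr N 0 k) = rr N 0 n * (\<Prod>k\<in>{i<..<n}. rr N 0 k)" by simp
  have 3: "fact n = fact i * rr 0 i n" using fact_rr[of i n 0] assms by simp
  have 4: "fact (N + (n - i)) = fact N * rr N 0 (n - i)" using fact_rr[of 0 "n - i" N] by simp
  have 5: "rr N 0 n = rr N 0 (n - i) * rr N (n - i) n" using rr_split[of 0 "n - i" n N] by simp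
  show ?thesis unfolding 1 2 3 4 5 KK_def by (simp add: ac_simps)
qed

definition XX :: "nat \<Rightarrow> nat \<Rightarrow> rat" where
  "XX N n = of_nat (PP N n) * hyp_bernoulli N n"

lemma XX_0: "XX N 0 = 1"
  using hb_rec[of N 0] by (simp add: XX_def PP_def rr_def)

lemma XX_rec:
  assumes "n > 0"
  shows "XX N n = - (\<Sum>i<n. of_nat (KK N n i) * XX N i)"
proof -
  obtain m where m: "n = Suc m" using assms by (cases n) auto
  have "(\<Sum>i\<le>n. hyp_bernoulli N i / (fact i * fact (N + (n - i)))) = 0"
    using hb_rec[of N n] assms by (simp add: atLeast0AtMost)
  hence "hyp_bernoulli N n / (fact n * fact N) = - (\<Sum>i<n. hyp_bernoulli N i / (fact i * fact (N + (n - i))))"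
    unfolding m by (simp add: lessThan_Suc_atMost[symmetric] add_eq_0_iff)
  hence "XX N n = of_nat (PP N n) * (fact n * fact N) * (- (\<Sum>i<n. hyp_bernoulli N i / (fact i * fact (N + (n - i)))))"
    unfolding XX_def by (simp add: field_simps)
  also have "\<dots> = - (\<Sum>i<n. of_nat (PP N n) * (fact n * fact N) * (hyp_bernoulli N i / (fact i * fact (N + (n - i)))))"
    by (simp add: sum_distrib_left)
  also have "\<dots> = - (\<Sum>i<n. of_nat (KK N n i) * XX N i)"
  proof (intro arg_cong[where f = uminus] sum.cong refl)
    fix i assume "i \<in> {..<n}"
    hence "of_nat (PP N n * fact n * fact N) = (of_nat (KK N n i * PP N i * fact i * fact (N + (n - i))) :: rat)"
      using key_ident by simp
    hence e: "of_nat (PP N n) * (fact n * fact N) = (of_nat (KK N n i) * of_nat (PP N i) * fact i * fact (N + (n - i)) :: rat)"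
      by (simp add: of_nat_mult)
    show "of_nat (PP N n) * (fact n * fact N) * (hyp_bernoulli N i / (fact i * fact (N + (n - i)))) = of_nat (KK N n i) * XX N i"
      unfolding e XX_def by (simp add: field_simps)
  qed
  finally show ?thesis .
qed

lemma XX_int_cong:
  assumes "N \<ge> 1"
  shows "\<exists>z w. XX N n = of_int z \<and> XX 1 n = of_int w \<and> [z = w] (mod int (N - 1))"
proof (induction n rule: less_induct)
  case (less n)
  show ?case
  proof (cases "n = 0")
    case True thus ?thesis by (intro exI[of _ 1]) (simp add: XX_0)
  next
    case False
    have "\<forall>i\<in>{..<n}. \<exists>zw. XX N i = of_int (fst zw) \<and> XX 1 i = of_int (snd zw) \<and> [fst zw = snd zw] (mod int (N - 1))"
      using less by auto
    then obtain f where f: "\<And>i. i < n \<Longrightarrow> XX N i = of_int (fst (f i)) \<and> XX 1 i = of_int (snd (f i)) \<and> [fst (f i) = snd (f i)] (mod int (N - 1))"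
      by (metis bchoice lessThan_iff)
    define z where "z = - (\<Sum>i<n. int (KK N n i) * fst (f i))"
    define w where "w = - (\<Sum>i<n. int (KK 1 n i) * snd (f i))"
    have "XX N n = of_int z"
    proof -
      have "XX N n = - (\<Sum>i<n. of_nat (KK N n i) * XX N i)" using False by (intro XX_rec) simp
      also have "\<dots> = - (\<Sum>i<n. of_nat (KK N n i) * of_int (fst (f i)))"
        using f by (intro arg_cong[where f = uminus] sum.cong) auto
      finally show ?thesis unfolding z_def by simp
    qed
    moreover have "XX 1 n = of_int w"
    proof -
      have "XX 1 n = - (\<Sum>i<n. of_nat (KK 1 n i) * XX 1 i)" using False by (intro XX_rec) simp
      also have "\<dots> = - (\<Sum>i<n. of_nat (KK 1 n i) * of_int (snd (f i)))"
        using f by (intro arg_cong[where f = uminus] sum.cong) auto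
      finally show ?thesis unfolding w_def by simp
    qed
    moreover have "[z = w] (mod int (N - 1))" unfolding z_def w_def
    proof (intro cong_minus_minus_iff[THEN iffD2] cong_sum cong_mult)
      fix i assume "i \<in> {..<n}"
      thus "[fst (f i) = snd (f i)] (mod int (N - 1))" using f by auto
      show "[int (KK N n i) = int (KK 1 n i)] (mod int (N - 1))"
        using KK_cong[OF assms] cong_int_iff by blast
    qed
    ultimately show ?thesis by blast
  qed
qed

theorem lemma1:
  fixes p N n :: nat
  assumes "prime p" and "N \<ge> 1"
  shows "rat_cong p (nat_ord p (N - 1))
           ((\<Prod>k=0..n. (fact (N + k) / fact N :: rat)) * hyp_bernoulli N n)
           ((\<Prod>k=0..n. (fact (1 + k) :: rat)) * bernoulli_num n)"
proof -
  have fr: "(fact (M + k) :: rat) = fact M * of_nat (rr M 0 k)" for M k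
  proof -
    have "(fact (M + k) :: nat) = fact M * rr M 0 k" using fact_rr[of 0 k M] by simp
    hence "(of_nat (fact (M + k)) :: rat) = of_nat (fact M * rr M 0 k)" by simp
    thus ?thesis by (simp add: of_nat_fact)
  qed
  have P: "(\<Prod>k=0..n. (fact (N + k) / fact N :: rat)) = of_nat (PP N n)"
    unfolding PP_def of_nat_prod by (intro prod.cong refl) (simp add: fr)
  have P1: "(\<Prod>k=0..n. (fact (1 + k) :: rat)) = of_nat (PP 1 n)"
    unfolding PP_def of_nat_prod by (intro prod.cong refl) (use fr[of 1] in simp)
  have B: "bernoulli_num n = hyp_bernoulli 1 n"
    unfolding bernoulli_num_def hyp_bernoulli_def by simp
  have L: "(\<Prod>k=0..n. (fact (N + k) / fact N :: rat)) * hyp_bernoulli N n = XX N n"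
    unfolding P XX_def ..
  have R: "(\<Prod>k=0..n. (fact (1 + k) :: rat)) * bernoulli_num n = XX 1 n"
    unfolding P1 B XX_def ..
  obtain z w where zw: "XX N n = of_int z" "XX 1 n = of_int w" "[z = w] (mod int (N - 1))"
    using XX_int_cong[OF assms(2), of n] by blast
  show ?thesis
    unfolding L R
  proof (cases "N = 1 \<or> z = w")
    case True
    hence "z = w" using zw(3) by (auto simp: cong_def)
    thus "rat_cong p (nat_ord p (N - 1)) (XX N n) (XX 1 n)"
      unfolding rat_cong_def zw by simp
  next
    case False
    define m where "m = multiplicity p (N - 1)"
    have "p ^ m dvd N - 1" unfolding m_def by (rule multiplicity_dvd)
    hence "int p ^ m dvd int (N - 1)" by (metis of_nat_dvd_iff of_nat_power)
    moreover have "int (N - 1) dvd z - w" using zw(3) by (metis cong_iff_dvd_diff)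
    ultimately have d: "int p ^ m dvd z - w" by (rule dvd_trans)
    have "z - w \<noteq> 0" using False by simp
    moreover have "\<not> is_unit (int p)" using assms(1) by auto
    ultimately have "m \<le> multiplicity (int p) (z - w)" using d by (intro multiplicity_geI)
    hence "int m \<le> padic_ord p (of_int z - of_int w)"
      unfolding padic_ord_def by (simp flip: of_int_diff)
    moreover have "nat_ord p (N - 1) = enat m" unfolding nat_ord_def m_def using False assms(2) by simp
    ultimately show "rat_cong p (nat_ord p (N - 1)) (XX N n) (XX 1 n)"
      unfolding rat_cong_def zw by blast
  qed
qed

end
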